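(* The pruning map $UT^1(\Sigma)\to T^1(\Sigma)$, $X\mapsto\overline{X}$, is a surjective $(2,1,1,0)$-morphism from $UT^1(\Sigma)$ with unpruned multiplication $\times$, unpruned $( * )$, unpruned $(+)$ and the trivial tree as distinguished identity, to $T^1(\Sigma)$ with pruned multiplication, $*$, $+$ and the trivial tree as distinguished identity. In particular, for all $X,Y\in UT^1(\Sigma)$: $\overline{X\times Y}=\overline{X}\,\overline{Y}$, $\overline{X^{(+)}}=\overline{X}^+$ and $\overline{X^{( * )}}=\overline{X}^*$.
   Context: Let $\Sigma$ be a set. A $\Sigma$-tree is a finite directed graph whose underlying undirected graph is a tree, edges labelled by elements of $\Sigma$, with distinguished start and end vertices such that there is a (possibly empty) directed path from the start vertex to the end vertex. A tree with one vertex is trivial. A morphism $X\to Y$ maps vertices to vertices and edges to edges, preserving initial vertex, terminal vertex and label of each edge, and maps start/end vertex of $X$ to start/end vertex of $Y$; an isomorphism is a morphism bijective on vertices and edges. A retraction is an idempotent morphism $X\to X$, its image (a subtree with the same start and end vertices) being a retract; $X$ is pruned if it has no non-identity retraction. Every tree $X$ has a pruned retract, unique up to isomorphism; its isomorphism type is $\overline{X}$. $UT^1(\Sigma)$ is the set of isomorphism types of $\Sigma$-trees and $T^1(\Sigma)$ that of pruned $\Sigma$-trees. Unpruned operations on $UT^1(\Sigma)$: $X\times Y$ is obtained from disjoint copies of $X$ and $Y$ by identifying the end vertex of $X$ with the start vertex of $Y$, taking start vertex that of $X$ and end vertex that of $Y$; $X^{(+)}$ has the same graph and start vertex as $X$ but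 end vertex equal to its start vertex; $X^{( * )}$ has the same graph and end vertex as $X$ but start vertex equal to its end vertex. Pruned operations on $T^1(\Sigma)$: $XY=\overline{X\times Y}$, $X^+=\overline{X^{(+)}}$, $X^*=\overline{X^{( * )}}$. *)

theory Defs
  imports Main
begin

text \<open>Edges are triples (initial vertex, label, terminal vertex); since the underlying
  undirected (multi)graph of a Sigma-tree is a tree, there are no parallel edges,
  so this loses nothing.\<close>
datatype ('v, 'a) tree = Tree (verts: "'v set") (edges: "('v \<times> 'a \<times> 'v) set") (start: 'v) (fin: 'v)

definition undir_rel :: "('v, 'a) tree \<Rightarrow> ('v \<times> 'v) set" where
  "undir_rel X = {(u, w). \<exists>a. (u, a, w) \<in> edges X \<or> (w, a, u) \<in> edges X}"

definition dir_rel :: "('v, 'a) tree \<Rightarrow> ('v \<times> 'v) set" where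
  "dir_rel X = {(u, w). \<exists>a. (u, a, w) \<in> edges X}"

definition sigma_tree :: "'a set \<Rightarrow> ('v, 'a) tree \<Rightarrow> bool" where
  "sigma_tree S X \<longleftrightarrow>
     finite (verts X) \<and> finite (edges X) \<and>
     edges X \<subseteq> verts X \<times> S \<times> verts X \<and>
     start X \<in> verts X \<and> fin X \<in> verts X \<and>
     (\<forall>u\<in>verts X. \<forall>w\<in>verts X. (u, w) \<in> (undir_rel X)\<^sup>*) \<and>
     card (edges X) + 1 = card (verts X) \<and>
     (start X, fin X) \<in> (dir_rel X)\<^sup>*"

definition emap :: "('v \<Rightarrow> 'w) \<Rightarrow> 'v \<times> 'a \<times> 'v \<Rightarrow> 'w \<times> 'a \<times> 'w" where
  "emap f e = (case e of (u, a, w) \<Rightarrow> (f u, a, f w))"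

text \<open>Morphisms (the edge map is determined by the vertex map, as there are no parallel edges).\<close>
definition tree_morph :: "('v, 'a) tree \<Rightarrow> ('w, 'a) tree \<Rightarrow> ('v \<Rightarrow> 'w) \<Rightarrow> bool" where
  "tree_morph X Y f \<longleftrightarrow>
     f ` verts X \<subseteq> verts Y \<and> emap f ` edges X \<subseteq> edges Y \<and>
     f (start X) = start Y \<and> f (fin X) = fin Y"

definition tree_iso :: "('v, 'a) tree \<Rightarrow> ('w, 'a) tree \<Rightarrow> bool" where
  "tree_iso X Y \<longleftrightarrow> (\<exists>f. tree_morph X Y f \<and> bij_betw f (verts X) (verts Y)
                        \<and> bij_betw (emap f) (edges X) (edges Y))"

definition retraction :: "('v, 'a) tree \<Rightarrow> ('v \<Rightarrow> 'v) \<Rightarrow> bool" where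
  "retraction X f \<longleftrightarrow> tree_morph X X f \<and> (\<forall>v\<in>verts X. f (f v) = f v)"

definition retract_img :: "('v, 'a) tree \<Rightarrow> ('v \<Rightarrow> 'v) \<Rightarrow> ('v, 'a) tree" where
  "retract_img X f = Tree (f ` verts X) (emap f ` edges X) (start X) (fin X)"

definition is_retract :: "('v, 'a) tree \<Rightarrow> ('v, 'a) tree \<Rightarrow> bool" where
  "is_retract P X \<longleftrightarrow> (\<exists>f. retraction X f \<and> P = retract_img X f)"

definition pruned :: "('v, 'a) tree \<Rightarrow> bool" where
  "pruned X \<longleftrightarrow> (\<forall>f. retraction X f \<longrightarrow> (\<forall>v\<in>verts X. f v = v))"

text \<open>P is a pruned retract of X; its isomorphism type is overline X.\<close>
definition is_pruned_retract :: "('v, 'a) tree \<Rightarrow> ('v, 'a) tree \<Rightarrow> bool" where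
  "is_pruned_retract P X \<longleftrightarrow> is_retract P X \<and> pruned P"

definition glue :: "('v, 'a) tree \<Rightarrow> ('w, 'a) tree \<Rightarrow> 'w \<Rightarrow> 'v + 'w" where
  "glue X Y y = (if y = start Y then Inl (fin X) else Inr y)"

definition tprod :: "('v, 'a) tree \<Rightarrow> ('w, 'a) tree \<Rightarrow> ('v + 'w, 'a) tree" where
  "tprod X Y = Tree (Inl ` verts X \<union> glue X Y ` verts Y)
                    (emap Inl ` edges X \<union> emap (glue X Y) ` edges Y)
                    (Inl (start X)) (glue X Y (fin Y))"

definition tplus :: "('v, 'a) tree \<Rightarrow> ('v, 'a) tree" where
  "tplus X = Tree (verts X) (edges X) (start X) (start X)"

definition tstar :: "('v, 'a) tree \<Rightarrow> ('v, 'a) tree" where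
  "tstar X = Tree (verts X) (edges X) (fin X) (fin X)"

definition trivial_tree :: "'v \<Rightarrow> ('v, 'a) tree" where
  "trivial_tree v = Tree {v} {} v v"

end

theory Submission
  imports Defs "HOL-Library.FuncSet"
begin

definition okt :: "('v,'a) tree \<Rightarrow> bool" where
  "okt T \<longleftrightarrow> finite (verts T) \<and> finite (edges T) \<and>
     (\<forall>u a w. (u,a,w) \<in> edges T \<longrightarrow> u \<in> verts T \<and> w \<in> verts T)"

lemma emap_simp[simp]: "emap f (u,a,w) = (f u, a, f w)"
  by (simp add: emap_def)

lemma emap_comp: "emap (f \<circ> g) = emap f \<circ> emap g"
  by (auto simp: emap_def fun_eq_iff split: prod.splits)

lemma emap_id: "emap id = id"
  by (auto simp: emap_def fun_eq_iff split: prod.splits)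

lemma morph_comp: "tree_morph X Y f \<Longrightarrow> tree_morph Y Z g \<Longrightarrow> tree_morph X Z (g \<circ> f)"
proof -
  assume a: "tree_morph X Y f" and b: "tree_morph Y Z g"
  have "(g \<circ> f) ` verts X \<subseteq> verts Z"
  proof
    fix x assume "x \<in> (g \<circ> f) ` verts X"
    then obtain v where v: "v \<in> verts X" "x = g (f v)" by auto
    have "f v \<in> verts Y" using a v(1) unfolding tree_morph_def by blast
    then show "x \<in> verts Z" using b v(2) unfolding tree_morph_def by blast
  qed
  moreover have "emap (g \<circ> f) ` edges X \<subseteq> edges Z"
  proof
    fix x assume "x \<in> emap (g \<circ> f) ` edges X"
    then obtain e where v: "e \<in> edges X" "x = emap g (emap f e)" by (auto simp: emap_comp)
    have "emap f e \<in> edges Y" using a v(1) unfolding tree_morph_def by blast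
    then show "x \<in> edges Z" using b v(2) unfolding tree_morph_def by blast
  qed
  ultimately show ?thesis using a b unfolding tree_morph_def by simp
qed

lemma morph_funpow: "tree_morph X X f \<Longrightarrow> tree_morph X X (f ^^ n)"
proof (induction n)
  case 0 then show ?case by (simp add: tree_morph_def emap_id[unfolded id_def])
next
  case (Suc n)
  have "tree_morph X X ((f ^^ n) \<circ> f)" by (rule morph_comp[OF Suc.prems Suc.IH[OF Suc.prems]])
  then show ?case by (simp only: funpow_Suc_right)
qed

lemma funpow_in: "f ` V \<subseteq> V \<Longrightarrow> v \<in> V \<Longrightarrow> (f ^^ n) v \<in> V"
  by (induction n) auto

lemma idem_power:
  assumes fin: "finite V" and sub: "f ` V \<subseteq> V"
  shows "\<exists>k\<ge>1. \<forall>v\<in>V. (f ^^ k) ((f ^^ k) v) = (f ^^ k) v"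
proof -
  define F where "F i = restrict (f ^^ Suc i) V" for i
  have "range F \<subseteq> V \<rightarrow>\<^sub>E V" unfolding F_def using funpow_in[OF sub] by (auto simp: PiE_def Pi_def simp del: funpow.simps)
  moreover have "finite (V \<rightarrow>\<^sub>E V)" using fin by (simp add: finite_PiE)
  ultimately have "finite (range F)" by (rule finite_subset)
  hence "\<not> inj F" using finite_imageD infinite_UNIV_nat by blast
  then obtain a b where ab: "a \<noteq> b" "F a = F b" unfolding inj_def by blast
  have eqab: "\<forall>v\<in>V. (f ^^ Suc a) v = (f ^^ Suc b) v"
  proof
    fix v assume "v \<in> V"
    then show "(f ^^ Suc a) v = (f ^^ Suc b) v"
      using fun_cong[OF ab(2), of v] unfolding F_def by simp
  qed
  obtain i j where ij: "1 \<le> i" "i < j" "\<forall>v\<in>V. (f ^^ i) v = (f ^^ j) v"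
  proof (cases "a < b")
    case True then show ?thesis using that[of "Suc a" "Suc b"] eqab by simp
  next
    case False then have "b < a" using ab(1) by simp
    then show ?thesis using that[of "Suc b" "Suc a"] eqab by simp
  qed
  define d where "d = j - i"
  have d: "d \<ge> 1" "j = i + d" using ij unfolding d_def by auto
  have step: "\<forall>v\<in>V. (f ^^ (n + d)) v = (f ^^ n) v" if "n \<ge> i" for n
  proof
    fix v assume v: "v \<in> V"
    define m where "m = n - i"
    have m: "n = m + i" using that unfolding m_def by simp
    have "(f ^^ (n + d)) v = (f ^^ m) ((f ^^ j) v)" using m d by (simp add: funpow_add add.assoc)
    also have "\<dots> = (f ^^ m) ((f ^^ i) v)" using ij v by simp
    also have "\<dots> = (f ^^ n) v" using m by (simp add: funpow_add)
    finally show "(f ^^ (n + d)) v = (f ^^ n) v" .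
  qed
  have mult: "\<forall>v\<in>V. (f ^^ (n + t * d)) v = (f ^^ n) v" if "n \<ge> i" for n t
  proof (induction t)
    case 0 then show ?case by simp
  next
    case (Suc t)
    have e: "n + Suc t * d = (n + t * d) + d" by simp
    show ?case unfolding e using step[of "n + t*d"] that Suc by simp
  qed
  define k where "k = i * d"
  have "k \<ge> i" using d unfolding k_def by simp
  hence "\<forall>v\<in>V. (f ^^ (k + i * d)) v = (f ^^ k) v" using mult by blast
  hence "\<forall>v\<in>V. (f ^^ k) ((f ^^ k) v) = (f ^^ k) v"
    by (simp add: funpow_add k_def)
  moreover have "k \<ge> 1" using ij d unfolding k_def by simp
  ultimately show ?thesis by blast
qed

lemma pruned_endo_inj:
  assumes "finite (verts P)" "pruned P" "tree_morph P P e"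
  shows "inj_on e (verts P)"
proof -
  have sub: "e ` verts P \<subseteq> verts P" using assms(3) by (simp add: tree_morph_def)
  obtain k where k: "k \<ge> 1" "\<forall>v\<in>verts P. (e ^^ k) ((e ^^ k) v) = (e ^^ k) v"
    using idem_power[OF assms(1) sub] by blast
  have "retraction P (e ^^ k)" using k morph_funpow[OF assms(3)] by (simp add: retraction_def)
  hence idk: "\<forall>v\<in>verts P. (e ^^ k) v = v" using assms(2) by (simp add: pruned_def)
  obtain m where m: "k = Suc m" using k(1) by (cases k) auto
  show ?thesis
  proof (rule inj_onI)
    fix x y assume xy: "x \<in> verts P" "y \<in> verts P" "e x = e y"
    have "(e ^^ k) x = (e ^^ m) (e x)" "(e ^^ k) y = (e ^^ m) (e y)"
      using m by (simp_all add: funpow_swap1)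
    then show "x = y" using idk xy by metis
  qed
qed

lemma core_iso:
  assumes P: "okt P" "pruned P" and Q: "okt Q" "pruned Q"
    and g: "tree_morph P Q g" and h: "tree_morph Q P h"
  shows "tree_iso P Q"
proof -
  have i1: "inj_on (h \<circ> g) (verts P)"
    using pruned_endo_inj[OF _ P(2) morph_comp[OF g h]] P(1) by (simp add: okt_def)
  have i2: "inj_on (g \<circ> h) (verts Q)"
    using pruned_endo_inj[OF _ Q(2) morph_comp[OF h g]] Q(1) by (simp add: okt_def)
  have gi: "inj_on g (verts P)" using i1 inj_on_imageI2 by blast
  have hi: "inj_on h (verts Q)" using i2 inj_on_imageI2 by blast
  have gs: "g ` verts P \<subseteq> verts Q" and hs: "h ` verts Q \<subseteq> verts P"
    using g h by (auto simp: tree_morph_def)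
  have fP: "finite (verts P)" "finite (edges P)" and fQ: "finite (verts Q)" "finite (edges Q)"
    using P Q by (auto simp: okt_def)
  have c1: "card (verts P) \<le> card (verts Q)" using card_inj_on_le[OF gi gs fQ(1)] .
  have c2: "card (verts Q) \<le> card (verts P)" using card_inj_on_le[OF hi hs fP(1)] .
  have "g ` verts P = verts Q"
    using card_subset_eq[OF fQ(1) gs] c1 c2 card_image[OF gi] by simp
  hence bv: "bij_betw g (verts P) (verts Q)" using gi by (simp add: bij_betw_def)
  have egi: "inj_on (emap g) (edges P)"
  proof (rule inj_onI)
    fix x y assume xy: "x \<in> edges P" "y \<in> edges P" "emap g x = emap g y"
    obtain u a w where x: "x = (u,a,w)" by (cases x) auto
    obtain u' a' w' where y: "y = (u',a',w')" by (cases y) auto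
    have "u \<in> verts P" "w \<in> verts P" "u' \<in> verts P" "w' \<in> verts P"
      using P(1) xy x y by (auto simp: okt_def)
    then show "x = y" using xy x y gi by (auto dest: inj_onD)
  qed
  have ehi: "inj_on (emap h) (edges Q)"
  proof (rule inj_onI)
    fix x y assume xy: "x \<in> edges Q" "y \<in> edges Q" "emap h x = emap h y"
    obtain u a w where x: "x = (u,a,w)" by (cases x) auto
    obtain u' a' w' where y: "y = (u',a',w')" by (cases y) auto
    have "u \<in> verts Q" "w \<in> verts Q" "u' \<in> verts Q" "w' \<in> verts Q"
      using Q(1) xy x y by (auto simp: okt_def)
    then show "x = y" using xy x y hi by (auto dest: inj_onD)
  qed
  have ges: "emap g ` edges P \<subseteq> edges Q" and hes: "emap h ` edges Q \<subseteq> edges P"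
    using g h by (auto simp: tree_morph_def)
  have "card (edges P) \<le> card (edges Q)" using card_inj_on_le[OF egi ges fQ(2)] .
  moreover have "card (edges Q) \<le> card (edges P)" using card_inj_on_le[OF ehi hes fP(2)] .
  ultimately have "emap g ` edges P = edges Q"
    using card_subset_eq[OF fQ(2) ges] card_image[OF egi] by simp
  hence be: "bij_betw (emap g) (edges P) (edges Q)" using egi by (simp add: bij_betw_def)
  show ?thesis unfolding tree_iso_def by (rule exI[of _ g]) (intro conjI g bv be)
qed

lemma retract_props:
  assumes "is_retract P A" "okt A"
  shows "okt P" "tree_morph P A id" "\<exists>r. tree_morph A P r"
proof -
  obtain r where r: "retraction A r" "P = retract_img A r" using assms(1) is_retract_def by blast
  have m: "r ` verts A \<subseteq> verts A" "emap r ` edges A \<subseteq> edges A" "r (start A) = start A" "r (fin A) = fin A"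
    using r(1) by (auto simp: retraction_def tree_morph_def)
  show "okt P" using assms(2) r(2) by (force simp: okt_def retract_img_def)
  show "tree_morph P A id" using r(2) m by (simp add: tree_morph_def retract_img_def emap_id)
  show "\<exists>r. tree_morph A P r" using r(2) m by (auto simp: tree_morph_def retract_img_def)
qed

lemma main_iso:
  assumes "okt A" "okt B" "is_pruned_retract P A" "is_pruned_retract Q B"
    "tree_morph A B f" "tree_morph B A g"
  shows "tree_iso P Q"
proof -
  obtain rA where rA: "tree_morph A P rA" using retract_props(3) assms(1,3) is_pruned_retract_def by blast
  obtain rB where rB: "tree_morph B Q rB" using retract_props(3) assms(2,4) is_pruned_retract_def by blast
  have iA: "tree_morph P A id" "okt P" using retract_props assms(1,3) is_pruned_retract_def by blast+
  have iB: "tree_morph Q B id" "okt Q" using retract_props assms(2,4) is_pruned_retract_def by blast+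
  show ?thesis
    apply (rule core_iso[OF iA(2) _ iB(2)])
    using assms(3,4) apply (simp_all add: is_pruned_retract_def)
    apply (rule morph_comp[OF morph_comp[OF iA(1) assms(5)] rB])
    apply (rule morph_comp[OF morph_comp[OF iB(1) assms(6)] rA])
    done
qed

lemma sigma_okt: "sigma_tree S X \<Longrightarrow> okt X"
  unfolding sigma_tree_def okt_def by blast

lemma tprod_okt: "okt X \<Longrightarrow> okt Y \<Longrightarrow> okt (tprod X Y)"
  unfolding okt_def tprod_def by force

lemma tplus_okt: "okt X \<Longrightarrow> okt (tplus X)" and tstar_okt: "okt X \<Longrightarrow> okt (tstar X)"
  unfolding okt_def tplus_def tstar_def by auto

lemma self_retract: "is_retract T T"
proof -
  have "retraction T id" by (simp add: retraction_def tree_morph_def emap_id)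
  moreover have "T = retract_img T id" by (cases T) (simp add: retract_img_def emap_id)
  ultimately show ?thesis unfolding is_retract_def by blast
qed

lemma self_iso: "tree_iso T T"
  unfolding tree_iso_def tree_morph_def by (rule exI[of _ id]) (simp add: emap_id)

lemma retr_data:
  assumes "is_pruned_retract P A"
  obtains r where "tree_morph A A r" "P = retract_img A r"
  using assms by (auto simp: is_pruned_retract_def is_retract_def retraction_def)

lemma prod_morph1:
  assumes "is_pruned_retract PX X" "is_pruned_retract PY Y"
  shows "\<exists>F. tree_morph (tprod X Y) (tprod PX PY) F"
proof -
  obtain rX where rX: "tree_morph X X rX" "PX = retract_img X rX" using retr_data assms(1) by blast
  obtain rY where rY: "tree_morph Y Y rY" "PY = retract_img Y rY" using retr_data assms(2) by blast
  define F where "F z = (case z of Inl x \<Rightarrow> Inl (rX x) | Inr y \<Rightarrow> glue PX PY (rY y))" for z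
  have sf: "rX (start X) = start X" "rX (fin X) = fin X" "rY (start Y) = start Y" "rY (fin Y) = fin Y"
    using rX(1) rY(1) by (auto simp: tree_morph_def)
  have FG: "F (glue X Y y) = glue PX PY (rY y)" for y
    using sf rX(2) rY(2) by (auto simp: F_def glue_def retract_img_def)
  have "tree_morph (tprod X Y) (tprod PX PY) F"
    unfolding tree_morph_def
  proof (intro conjI)
    show "F ` verts (tprod X Y) \<subseteq> verts (tprod PX PY)"
      using FG rX(2) rY(2) by (auto simp: tprod_def F_def retract_img_def)
    show "emap F ` edges (tprod X Y) \<subseteq> edges (tprod PX PY)"
    proof
      fix e assume "e \<in> emap F ` edges (tprod X Y)"
      then obtain e0 where e0: "e0 \<in> edges (tprod X Y)" "e = emap F e0" by blast
      obtain u a w where "e0 = (u,a,w)" by (cases e0) auto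
      then show "e \<in> edges (tprod PX PY)" using e0 FG rX(2) rY(2)
        by (auto simp: tprod_def F_def retract_img_def emap_def image_iff split: prod.splits) (fastforce+)
    qed
    show "F (start (tprod X Y)) = start (tprod PX PY)"
      using sf rX(2) by (simp add: tprod_def F_def retract_img_def)
    show "F (fin (tprod X Y)) = fin (tprod PX PY)"
      using FG sf rY(2) by (simp add: tprod_def retract_img_def)
  qed
  then show ?thesis by blast
qed

lemma prod_morph2:
  assumes "is_pruned_retract PX X" "is_pruned_retract PY Y"
  shows "\<exists>G. tree_morph (tprod PX PY) (tprod X Y) G"
proof -
  obtain rX where rX: "tree_morph X X rX" "PX = retract_img X rX" using retr_data assms(1) by blast
  obtain rY where rY: "tree_morph Y Y rY" "PY = retract_img Y rY" using retr_data assms(2) by blast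
  define G where "G z = (case z of Inl x \<Rightarrow> Inl x | Inr y \<Rightarrow> glue X Y y)" for z
  have gl: "glue PX PY = glue X Y" using rX(2) rY(2) by (simp add: glue_def retract_img_def fun_eq_iff)
  have GG: "G (glue X Y y) = glue X Y y" for y by (simp add: G_def glue_def)
  have m: "rX ` verts X \<subseteq> verts X" "emap rX ` edges X \<subseteq> edges X"
          "rY ` verts Y \<subseteq> verts Y" "emap rY ` edges Y \<subseteq> edges Y"
    using rX(1) rY(1) by (auto simp: tree_morph_def)
  have "tree_morph (tprod PX PY) (tprod X Y) G"
    unfolding tree_morph_def
  proof (intro conjI)
    show "G ` verts (tprod PX PY) \<subseteq> verts (tprod X Y)"
      using m rX(2) rY(2) gl GG by (auto simp: tprod_def G_def retract_img_def)
    show "emap G ` edges (tprod PX PY) \<subseteq> edges (tprod X Y)"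
    proof
      fix e assume "e \<in> emap G ` edges (tprod PX PY)"
      then obtain e0 where e0: "e0 \<in> edges (tprod PX PY)" "e = emap G e0" by blast
      have eX: "edges PX \<subseteq> edges X" "edges PY \<subseteq> edges Y" using m rX(2) rY(2) by (simp_all add: retract_img_def)
      have c1: "emap G (emap Inl z) = emap Inl z" for z by (cases z) (simp add: G_def)
      have c2: "emap G (emap (glue X Y) z) = emap (glue X Y) z" for z by (cases z) (simp add: GG)
      from e0(1) have "e0 \<in> emap Inl ` edges PX \<or> e0 \<in> emap (glue X Y) ` edges PY"
        by (simp add: tprod_def gl)
      then show "e \<in> edges (tprod X Y)"
      proof
        assume "e0 \<in> emap Inl ` edges PX"
        then obtain z where "z \<in> edges PX" "e0 = emap Inl z" by blast
        then have "e = emap Inl z" "emap Inl z \<in> emap Inl ` edges X" using e0(2) c1[of z] eX by (metis, blast)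
        then show ?thesis unfolding tprod_def tree.sel by blast
      next
        assume "e0 \<in> emap (glue X Y) ` edges PY"
        then obtain z where "z \<in> edges PY" "e0 = emap (glue X Y) z" by blast
        then have "e = emap (glue X Y) z" "emap (glue X Y) z \<in> emap (glue X Y) ` edges Y" using e0(2) c2[of z] eX by (metis, blast)
        then show ?thesis unfolding tprod_def tree.sel by blast
      qed
    qed
    show "G (start (tprod PX PY)) = start (tprod X Y)"
      using rX(2) by (simp add: tprod_def G_def retract_img_def)
    show "G (fin (tprod PX PY)) = fin (tprod X Y)"
      using GG gl rY(2) by (simp add: tprod_def retract_img_def)
  qed
  then show ?thesis by blast
qed

lemma pm_morphs:
  assumes "is_pruned_retract PX X"
  shows "\<exists>f. tree_morph (tplus X) (tplus PX) f" "\<exists>f. tree_morph (tplus PX) (tplus X) f"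
        "\<exists>f. tree_morph (tstar X) (tstar PX) f" "\<exists>f. tree_morph (tstar PX) (tstar X) f"
proof -
  obtain r where r: "tree_morph X X r" "PX = retract_img X r" using retr_data assms by blast
  have m: "r ` verts X \<subseteq> verts X" "emap r ` edges X \<subseteq> edges X" "r (start X) = start X" "r (fin X) = fin X"
    using r(1) by (auto simp: tree_morph_def)
  show "\<exists>f. tree_morph (tplus X) (tplus PX) f" using r(2) m
    by (intro exI[of _ r]) (auto simp: tree_morph_def tplus_def retract_img_def)
  show "\<exists>f. tree_morph (tplus PX) (tplus X) f" using r(2) m
    by (intro exI[of _ id]) (auto simp: tree_morph_def tplus_def retract_img_def emap_id)
  show "\<exists>f. tree_morph (tstar X) (tstar PX) f" using r(2) m
    by (intro exI[of _ r]) (auto simp: tree_morph_def tstar_def retract_img_def)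
  show "\<exists>f. tree_morph (tstar PX) (tstar X) f" using r(2) m
    by (intro exI[of _ id]) (auto simp: tree_morph_def tstar_def retract_img_def emap_id)
qed

lemma triv_pruned: "pruned (trivial_tree v)"
  by (simp add: pruned_def retraction_def tree_morph_def trivial_tree_def)

theorem theorem4p5:
  fixes S :: "'a set"
  shows
    \<comment> \<open>multiplication: overline(X x Y) = overline(X) overline(Y) = overline(overline X x overline Y)\<close>
    "(\<forall>(X::('v,'a) tree) (Y::('w,'a) tree) PX PY PXY Q.
        sigma_tree S X \<and> sigma_tree S Y \<and>
        is_pruned_retract PX X \<and> is_pruned_retract PY Y \<and>
        is_pruned_retract PXY (tprod X Y) \<and> is_pruned_retract Q (tprod PX PY)
        \<longrightarrow> tree_iso PXY Q)
   \<and> \<comment> \<open>(+): overline(X^(+)) = overline(X)^+\<close>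
    (\<forall>(X::('v,'a) tree) PX P Q.
        sigma_tree S X \<and> is_pruned_retract PX X \<and>
        is_pruned_retract P (tplus X) \<and> is_pruned_retract Q (tplus PX)
        \<longrightarrow> tree_iso P Q)
   \<and> \<comment> \<open>(*): overline(X^( * )) = overline(X)^*\<close>
    (\<forall>(X::('v,'a) tree) PX P Q.
        sigma_tree S X \<and> is_pruned_retract PX X \<and>
        is_pruned_retract P (tstar X) \<and> is_pruned_retract Q (tstar PX)
        \<longrightarrow> tree_iso P Q)
   \<and> \<comment> \<open>identity: the trivial tree is sent to the trivial tree\<close>
    (\<forall>(v::'v) P. is_pruned_retract P (trivial_tree v :: ('v,'a) tree)
        \<longrightarrow> tree_iso P (trivial_tree v :: ('v,'a) tree))
   \<and> \<comment> \<open>surjectivity: every pruned Sigma-tree is (up to iso) the pruning of some Sigma-tree\<close>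
    (\<forall>T::('v,'a) tree. sigma_tree S T \<and> pruned T \<longrightarrow>
        (\<exists>X::('v,'a) tree. sigma_tree S X \<and> (\<exists>P. is_pruned_retract P X \<and> tree_iso P T)))"
proof (intro conjI allI impI)
  fix X :: "('v,'a) tree" and Y :: "('w,'a) tree" and PX PY PXY Q
  assume a: "sigma_tree S X \<and> sigma_tree S Y \<and> is_pruned_retract PX X \<and> is_pruned_retract PY Y \<and>
        is_pruned_retract PXY (tprod X Y) \<and> is_pruned_retract Q (tprod PX PY)"
  have oX: "okt X" "okt Y" using a sigma_okt by blast+
  have oP: "okt PX" "okt PY" using a oX retract_props(1) is_pruned_retract_def by blast+
  obtain F where F: "tree_morph (tprod X Y) (tprod PX PY) F" using prod_morph1 a by blast
  obtain G where G: "tree_morph (tprod PX PY) (tprod X Y) G" using prod_morph2 a by blast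
  show "tree_iso PXY Q"
    using main_iso[OF tprod_okt[OF oX] tprod_okt[OF oP] _ _ F G] a by blast
next
  fix X :: "('v,'a) tree" and PX P Q
  assume a: "sigma_tree S X \<and> is_pruned_retract PX X \<and> is_pruned_retract P (tplus X) \<and> is_pruned_retract Q (tplus PX)"
  have oX: "okt X" using a sigma_okt by blast
  have oP: "okt PX" using a oX retract_props(1) is_pruned_retract_def by blast
  obtain f g where "tree_morph (tplus X) (tplus PX) f" "tree_morph (tplus PX) (tplus X) g"
    using pm_morphs a by metis
  then show "tree_iso P Q" using main_iso[OF tplus_okt[OF oX] tplus_okt[OF oP]] a by blast
next
  fix X :: "('v,'a) tree" and PX P Q
  assume a: "sigma_tree S X \<and> is_pruned_retract PX X \<and> is_pruned_retract P (tstar X) \<and> is_pruned_retract Q (tstar PX)"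
  have oX: "okt X" using a sigma_okt by blast
  have oP: "okt PX" using a oX retract_props(1) is_pruned_retract_def by blast
  obtain f g where "tree_morph (tstar X) (tstar PX) f" "tree_morph (tstar PX) (tstar X) g"
    using pm_morphs a by metis
  then show "tree_iso P Q" using main_iso[OF tstar_okt[OF oX] tstar_okt[OF oP]] a by blast
next
  fix v :: 'v and P
  assume a: "is_pruned_retract P (trivial_tree v :: ('v,'a) tree)"
  have o: "okt (trivial_tree v :: ('v,'a) tree)" by (simp add: okt_def trivial_tree_def)
  have "is_pruned_retract (trivial_tree v :: ('v,'a) tree) (trivial_tree v)"
    by (simp add: is_pruned_retract_def self_retract triv_pruned)
  moreover have "tree_morph (trivial_tree v :: ('v,'a) tree) (trivial_tree v) id"
    by (simp add: tree_morph_def emap_id)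
  ultimately show "tree_iso P (trivial_tree v :: ('v,'a) tree)"
    using main_iso[OF o o a] by blast
next
  fix T :: "('v,'a) tree"
  assume a: "sigma_tree S T \<and> pruned T"
  show "\<exists>X::('v,'a) tree. sigma_tree S X \<and> (\<exists>P. is_pruned_retract P X \<and> tree_iso P T)"
    using a self_retract self_iso by (auto simp: is_pruned_retract_def)
qed

end
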